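(* Let $(X,d)$ be a compact metric space and $f_{0,\infty}=\{f_n\}_{n=0}^\infty$ a sequence of continuous self-maps of $X$ with $f_0$ surjective. If $(X,f_{0,\infty})$ is multi-sensitive, then there exists $A\in\mathcal{S}$ such that $h^{*}(f_{0,\infty})\geq h_{A}(f_{0,\infty})\geq\log 2$, and $h_A(\hat{f}_{0,\infty})=h^{*}(\hat{f}_{0,\infty})=+\infty$.
   Context: $f_0^n=f_{n-1}\circ\cdots\circ f_0$, $f_0^0=\mathrm{id}$. $(X,f_{0,\infty})$ is multi-sensitive if there is $\delta>0$ such that for every $k\ge1$ and nonempty open $V_1,\dots,V_k\subset X$ there is $n\ge1$ with $\mathrm{diam}(f_0^n(V_i))>\delta$ for all $1\le i\le k$. $\mathcal S$ is the set of strictly increasing sequences $A=\{a_i\}_{i\ge1}$ of nonnegative integers. For a compact metric space $Z$ and continuous self-maps $g_{0,\infty}$, $h_A(g_{0,\infty})=\sup_{\mathscr A}\limsup_{n\to\infty}\frac1n\log\mathcal N(\bigvee_{i=1}^n (g_0^{a_i})^{-1}\mathscr A)$ over finite open covers ($\bigvee$ = common refinement, $\mathcal N$ = minimal cardinality of a subcover), $\log$ natural, and $h^*(g_{0,\infty})=\sup_{A\in\mathcal S}h_A(g_{0,\infty})$. $\mathcal M(X)$ is the space of Borel probability measures with the weak$^*$ topology (compact metric, e.g. via the Prohorov metric), and $\hat f_n(\mu)(B)=\mu(f_n^{-1}(B))$. *)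

theory Defs
  imports "HOL-Analysis.Analysis" "HOL-Probability.Probability"
begin

fun comp_seq :: "(nat \<Rightarrow> 'b \<Rightarrow> 'b) \<Rightarrow> nat \<Rightarrow> 'b \<Rightarrow> 'b" where
  "comp_seq f 0 = id"
| "comp_seq f (Suc n) = f n \<circ> comp_seq f n"

definition multi_sensitive :: "'a::metric_space set \<Rightarrow> (nat \<Rightarrow> 'a \<Rightarrow> 'a) \<Rightarrow> bool" where
  "multi_sensitive X f \<longleftrightarrow>
     (\<exists>\<delta>>0. \<forall>k\<ge>1. \<forall>V :: nat \<Rightarrow> 'a set.
        (\<forall>i\<in>{1..k}. openin (top_of_set X) (V i) \<and> V i \<noteq> {}) \<longrightarrow>
        (\<exists>n\<ge>1. \<forall>i\<in>{1..k}. diameter (comp_seq f n ` V i) > \<delta>))"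

definition open_cover :: "'b topology \<Rightarrow> 'b set set \<Rightarrow> bool" where
  "open_cover T U \<longleftrightarrow> finite U \<and> (\<forall>u\<in>U. openin T u) \<and> \<Union>U = topspace T"

definition cover_num :: "'b topology \<Rightarrow> 'b set set \<Rightarrow> nat" where
  "cover_num T U = Inf {card V | V. V \<subseteq> U \<and> \<Union>V = topspace T}"

definition join_cover :: "'b topology \<Rightarrow> (nat \<Rightarrow> 'b \<Rightarrow> 'b) \<Rightarrow> (nat \<Rightarrow> nat) \<Rightarrow> 'b set set \<Rightarrow> nat \<Rightarrow> 'b set set" where
  "join_cover T g a U n =
     {topspace T \<inter> (\<Inter>i\<in>{1..n}. comp_seq g (a i) -` c i) | c. \<forall>i\<in>{1..n}. c i \<in> U}"

definition seq_entropy :: "'b topology \<Rightarrow> (nat \<Rightarrow> 'b \<Rightarrow> 'b) \<Rightarrow> (nat \<Rightarrow> nat) \<Rightarrow> ereal" where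
  "seq_entropy T g a =
     (SUP U\<in>{U. open_cover T U}.
        limsup (\<lambda>n. ereal (ln (real (cover_num T (join_cover T g a U n))) / real n)))"

text \<open>The set S of strictly increasing sequences a_1 < a_2 < ... of nonnegative integers
  (the value a 0 is irrelevant).\<close>
definition seqS :: "(nat \<Rightarrow> nat) set" where
  "seqS = {a. strict_mono_on {1..} a}"

definition sup_seq_entropy :: "'b topology \<Rightarrow> (nat \<Rightarrow> 'b \<Rightarrow> 'b) \<Rightarrow> ereal" where
  "sup_seq_entropy T g = (SUP a\<in>seqS. seq_entropy T g a)"

definition prob_measures :: "'a::metric_space set \<Rightarrow> 'a measure set" where
  "prob_measures X = {\<mu>. prob_space \<mu> \<and> sets \<mu> = sets (restrict_space borel X)}"

definition weak_star_topology :: "'a::metric_space set \<Rightarrow> 'a measure topology" where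
  "weak_star_topology X = topology_generated_by
     {{\<mu> \<in> prob_measures X. (\<integral>x. g x \<partial>\<mu>) \<in> W} | g W.
        continuous_on X (g :: 'a \<Rightarrow> real) \<and> open W}"

definition induced_maps :: "'a::metric_space set \<Rightarrow> (nat \<Rightarrow> 'a \<Rightarrow> 'a) \<Rightarrow> nat \<Rightarrow> 'a measure \<Rightarrow> 'a measure" where
  "induced_maps X f n \<mu> = distr \<mu> (restrict_space borel X) (f n)"

end

theory Submission
  imports Defs
begin


lemma comp_seq_into:
  assumes "\<And>n. f n ` S \<subseteq> S" shows "comp_seq f m ` S \<subseteq> S"
  using assms by (induction m) (auto simp: image_subset_iff)

lemma comp_seq_cont:
  assumes "\<And>n. continuous_on X (f n)" "\<And>n. f n ` X \<subseteq> X"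
  shows "continuous_on X (comp_seq f m)"
proof (induction m)
  case 0 then show ?case by (simp add: continuous_on_id)
next
  case (Suc m)
  have "comp_seq f m ` X \<subseteq> X" using comp_seq_into assms(2) by blast
  then show ?case using Suc assms(1)
    by (simp add: continuous_on_compose2[of X "f m" X "comp_seq f m"])
qed

lemma join_cover_finite:
  assumes "finite U"
  shows "finite (join_cover T g a U n)"
proof -
  have "join_cover T g a U n \<subseteq> (\<lambda>c. topspace T \<inter> (\<Inter>i\<in>{1..n}. comp_seq g (a i) -` c i)) ` (PiE {1..n} (\<lambda>_. U))"
  proof
    fix e assume "e \<in> join_cover T g a U n"
    then obtain c where c: "\<forall>i\<in>{1..n}. c i \<in> U" and e: "e = topspace T \<inter> (\<Inter>i\<in>{1..n}. comp_seq g (a i) -` c i)"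
      unfolding join_cover_def by blast
    have "restrict c {1..n} \<in> PiE {1..n} (\<lambda>_. U)" using c by auto
    moreover have "e = topspace T \<inter> (\<Inter>i\<in>{1..n}. comp_seq g (a i) -` (restrict c {1..n}) i)"
      unfolding e by (intro arg_cong2[where f="(\<inter>)"] refl INF_cong) simp
    ultimately show "e \<in> (\<lambda>c. topspace T \<inter> (\<Inter>i\<in>{1..n}. comp_seq g (a i) -` c i)) ` (PiE {1..n} (\<lambda>_. U))"
      by blast
  qed
  moreover have "finite (PiE {1..n} (\<lambda>_. U))" using assms by (intro finite_PiE) auto
  ultimately show ?thesis by (rule finite_subset[OF _ finite_imageI])
qed

lemma join_cover_covers:
  assumes "open_cover T U" "\<And>m. g m ` topspace T \<subseteq> topspace T"
  shows "\<Union>(join_cover T g a U n) = topspace T"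
proof
  show "\<Union>(join_cover T g a U n) \<subseteq> topspace T" unfolding join_cover_def by auto
next
  show "topspace T \<subseteq> \<Union>(join_cover T g a U n)"
  proof
    fix x assume x: "x \<in> topspace T"
    have "\<forall>i. \<exists>u\<in>U. comp_seq g (a i) x \<in> u"
    proof
      fix i
      have "comp_seq g (a i) x \<in> topspace T" using comp_seq_into[of g "topspace T", OF assms(2)] x by blast
      then show "\<exists>u\<in>U. comp_seq g (a i) x \<in> u" using assms(1) unfolding open_cover_def by blast
    qed
    then obtain c where c: "\<forall>i. c i \<in> U \<and> comp_seq g (a i) x \<in> c i" using choice[of "\<lambda>i u. u \<in> U \<and> comp_seq g (a i) x \<in> u"] by blast
    have "topspace T \<inter> (\<Inter>i\<in>{1..n}. comp_seq g (a i) -` c i) \<in> join_cover T g a U n"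
      unfolding join_cover_def using c by blast
    moreover have "x \<in> topspace T \<inter> (\<Inter>i\<in>{1..n}. comp_seq g (a i) -` c i)" using x c by auto
    ultimately show "x \<in> \<Union>(join_cover T g a U n)" by blast
  qed
qed

lemma cover_num_ge:
  assumes oc: "open_cover T U" and inv: "\<And>m. g m ` topspace T \<subseteq> topspace T"
    and fin: "finite I" and phi: "\<phi> ` I \<subseteq> topspace T"
    and sep: "\<And>u v. u \<in> I \<Longrightarrow> v \<in> I \<Longrightarrow> u \<noteq> v \<Longrightarrow>
        \<exists>i\<in>{1..n}. \<forall>c\<in>U. \<not> (comp_seq g (a i) (\<phi> u) \<in> c \<and> comp_seq g (a i) (\<phi> v) \<in> c)"
  shows "card I \<le> cover_num T (join_cover T g a U n)"
proof -
  let ?J = "join_cover T g a U n"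
  let ?S = "{card V | V. V \<subseteq> ?J \<and> \<Union>V = topspace T}"
  have cov: "\<Union>?J = topspace T" using join_cover_covers[of T U g a n] oc inv by blast
  have ne: "card ?J \<in> ?S" using cov by blast
  have lb: "card I \<le> k" if "k \<in> ?S" for k
  proof -
    obtain V where V: "V \<subseteq> ?J" "\<Union>V = topspace T" "k = card V" using \<open>k \<in> ?S\<close> by blast
    have "finite ?J" using join_cover_finite oc unfolding open_cover_def by blast
    then have finV: "finite V" using V(1) by (rule rev_finite_subset)
    have "\<forall>u\<in>I. \<exists>e\<in>V. \<phi> u \<in> e" using phi V(2) by blast
    then obtain h where h: "\<forall>u\<in>I. h u \<in> V \<and> \<phi> u \<in> h u" using bchoice[of I "\<lambda>u e. e \<in> V \<and> \<phi> u \<in> e"] by blast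
    have "inj_on h I"
    proof (rule inj_onI, rule ccontr)
      fix u v assume uv: "u \<in> I" "v \<in> I" "h u = h v" "u \<noteq> v"
      then obtain i where i: "i \<in> {1..n}" and ns: "\<forall>c\<in>U. \<not> (comp_seq g (a i) (\<phi> u) \<in> c \<and> comp_seq g (a i) (\<phi> v) \<in> c)"
        using sep by blast
      have "h u \<in> ?J" using h uv V(1) by blast
      then obtain c where c: "\<forall>i\<in>{1..n}. c i \<in> U" and e: "h u = topspace T \<inter> (\<Inter>i\<in>{1..n}. comp_seq g (a i) -` c i)"
        unfolding join_cover_def by blast
      have "\<phi> u \<in> h u" "\<phi> v \<in> h u" using h uv by auto
      then have "comp_seq g (a i) (\<phi> u) \<in> c i" "comp_seq g (a i) (\<phi> v) \<in> c i" using e i by auto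
      then show False using ns c i by blast
    qed
    then have "card I \<le> card V" using card_inj_on_le[of h I V] h finV by blast
    then show ?thesis using V(3) by simp
  qed
  have "?S \<noteq> {}" using ne by blast
  then have "Inf ?S \<in> ?S" by (rule Inf_nat_def1)
  then show ?thesis unfolding cover_num_def using lb by blast
qed

lemma seq_entropy_ge:
  assumes oc: "open_cover T U" and K: "K \<ge> 1"
    and cn: "\<And>n. n \<ge> 1 \<Longrightarrow> K ^ n \<le> real (cover_num T (join_cover T g a U n))"
  shows "ereal (ln K) \<le> seq_entropy T g a"
proof -
  have ev: "\<forall>\<^sub>F n in sequentially. ereal (ln K) \<le> ereal (ln (real (cover_num T (join_cover T g a U n))) / real n)"
  proof (rule eventually_sequentiallyI[of 1])
    fix n :: nat assume n: "1 \<le> n"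
    have pos: "0 < K ^ n" using K by simp
    have "ln (K ^ n) \<le> ln (real (cover_num T (join_cover T g a U n)))"
      using cn[OF n] pos by simp
    then have "real n * ln K \<le> ln (real (cover_num T (join_cover T g a U n)))"
      using K by (simp add: ln_realpow)
    then have "ln K \<le> ln (real (cover_num T (join_cover T g a U n))) / real n"
      using n by (simp add: pos_le_divide_eq mult.commute)
    then show "ereal (ln K) \<le> ereal (ln (real (cover_num T (join_cover T g a U n))) / real n)" by simp
  qed
  have "ereal (ln K) \<le> limsup (\<lambda>n. ereal (ln (real (cover_num T (join_cover T g a U n))) / real n))"
    by (rule le_Limsup[OF _ ev]) simp
  also have "\<dots> \<le> seq_entropy T g a"
    unfolding seq_entropy_def using oc by (intro SUP_upper) simp
  finally show ?thesis .
qed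



lemma shrink:
  assumes cont: "\<And>n. continuous_on X (f n)" and into: "\<And>n. f n ` X \<subseteq> X"
    and U: "openin (top_of_set X) U" "U \<noteq> {}" and g: "\<gamma> > 0"
  shows "\<exists>U'. openin (top_of_set X) U' \<and> U' \<noteq> {} \<and> U' \<subseteq> U \<and>
           (\<forall>m\<le>M. \<forall>y\<in>U'. \<forall>z\<in>U'. dist (comp_seq f m y) (comp_seq f m z) < \<gamma>)"
proof -
  obtain x where x: "x \<in> U" using U(2) by blast
  have UX: "U \<subseteq> X" using openin_imp_subset[OF U(1)] by simp
  define U' where "U' = U \<inter> (\<Inter>m\<in>{..M}. X \<inter> comp_seq f m -` ball (comp_seq f m x) (\<gamma>/2))"
  have "openin (top_of_set X) (\<Inter>m\<in>{..M}. X \<inter> comp_seq f m -` ball (comp_seq f m x) (\<gamma>/2))"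
  proof (rule openin_INT2)
    show "finite {..M}" by simp
    show "{..M} \<noteq> {}" by auto
    fix m assume "m \<in> {..M}"
    show "openin (top_of_set X) (X \<inter> comp_seq f m -` ball (comp_seq f m x) (\<gamma> / 2))"
      by (rule continuous_openin_preimage_gen[OF comp_seq_cont[OF cont into]]) simp
  qed
  then have o: "openin (top_of_set X) U'" unfolding U'_def using U(1) by (rule openin_Int[rotated])
  have "x \<in> U'" unfolding U'_def using x UX g by auto
  moreover have "\<forall>m\<le>M. \<forall>y\<in>U'. \<forall>z\<in>U'. dist (comp_seq f m y) (comp_seq f m z) < \<gamma>"
  proof (intro allI impI ballI)
    fix m y z assume that: "m \<le> M" "y \<in> U'" "z \<in> U'"
    have "dist (comp_seq f m x) (comp_seq f m y) < \<gamma>/2" "dist (comp_seq f m x) (comp_seq f m z) < \<gamma>/2"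
      using that unfolding U'_def by auto
    then show "dist (comp_seq f m y) (comp_seq f m z) < \<gamma>" using dist_triangle[of "comp_seq f m y" "comp_seq f m z" "comp_seq f m x"]
      by (simp add: dist_commute)
  qed
  moreover have "U' \<subseteq> U" unfolding U'_def by (rule Int_lower1)
  ultimately show ?thesis using o by blast
qed

definition good_set :: "'a::metric_space set \<Rightarrow> (nat \<Rightarrow> 'a \<Rightarrow> 'a) \<Rightarrow> 'a set \<Rightarrow> 'a set \<Rightarrow> 'a set \<Rightarrow> bool" where
  "good_set X f W0 W1 V \<longleftrightarrow> (\<forall>Fam. finite Fam \<and> (\<forall>U\<in>Fam. openin (top_of_set X) U \<and> U \<noteq> {} \<and> U \<subseteq> V) \<longrightarrow>
      (\<exists>n\<ge>1. \<forall>U\<in>Fam. comp_seq f n ` U \<inter> W0 \<noteq> {} \<and> comp_seq f n ` U \<inter> W1 \<noteq> {}))"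

lemma tree:
  assumes cont: "\<And>n. continuous_on X (f n)" and into: "\<And>n. f n ` X \<subseteq> X"
    and W: "open W0" "open W1" and g: "\<gamma> > 0" and gap: "\<And>x y. x \<in> W0 \<Longrightarrow> y \<in> W1 \<Longrightarrow> \<gamma> \<le> dist x y"
    and V: "openin (top_of_set X) V" "V \<noteq> {}" and good: "good_set X f W0 W1 V"
  shows "\<exists>a::nat\<Rightarrow>nat. strict_mono a \<and> (\<forall>n s. \<exists>x\<in>X. \<forall>i\<in>{1..n}. comp_seq f (a i) x \<in> (if s i then W1 else W0))"
proof -
  define P where "P = (\<lambda>n (st :: nat \<times> (bool list \<Rightarrow> 'a set)). \<forall>bs. length bs = n \<longrightarrow>
     openin (top_of_set X) (snd st bs) \<and> snd st bs \<noteq> {} \<and> snd st bs \<subseteq> V)"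
  define Q where "Q = (\<lambda>n (st :: nat \<times> (bool list \<Rightarrow> 'a set)) st'. fst st < fst st' \<and>
     (\<forall>bs b. length bs = n \<longrightarrow> snd st' (bs @ [b]) \<subseteq> snd st bs \<and>
        comp_seq f (fst st') ` snd st' (bs @ [b]) \<subseteq> (if b then W1 else W0)))"
  have VX: "V \<subseteq> X" using openin_imp_subset[OF V(1)] by simp
  have P0: "\<exists>st. P 0 st" unfolding P_def using V by (intro exI[of _ "(0, \<lambda>_. V)"]) auto
  have step: "\<exists>st'. P (Suc n) st' \<and> Q n st st'" if Pst: "P n st" for n st
  proof -
    obtain t L where st: "st = (t, L)" by fastforce
    have PL: "\<forall>bs. length bs = n \<longrightarrow> openin (top_of_set X) (L bs) \<and> L bs \<noteq> {} \<and> L bs \<subseteq> V"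
      using Pst unfolding P_def st snd_conv by (simp only: split_beta snd_conv)
    let ?B = "{bs :: bool list. length bs = n}"
    have finB: "finite ?B" using finite_lists_length_eq[of "UNIV :: bool set" n] by simp
    have ex: "\<forall>bs\<in>?B. \<exists>U'. openin (top_of_set X) U' \<and> U' \<noteq> {} \<and> U' \<subseteq> L bs \<and>
           (\<forall>m\<le>t. \<forall>y\<in>U'. \<forall>z\<in>U'. dist (comp_seq f m y) (comp_seq f m z) < \<gamma>)"
    proof
      fix bs :: "bool list" assume "bs \<in> ?B"
      then have "openin (top_of_set X) (L bs)" "L bs \<noteq> {}" using PL by blast+
      from shrink[OF cont into this g] show "\<exists>U'. openin (top_of_set X) U' \<and> U' \<noteq> {} \<and> U' \<subseteq> L bs \<and>
           (\<forall>m\<le>t. \<forall>y\<in>U'. \<forall>z\<in>U'. dist (comp_seq f m y) (comp_seq f m z) < \<gamma>)" .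
    qed
    obtain L0 where L0all: "\<forall>bs\<in>?B. openin (top_of_set X) (L0 bs) \<and> L0 bs \<noteq> {} \<and> L0 bs \<subseteq> L bs \<and>
           (\<forall>m\<le>t. \<forall>y\<in>L0 bs. \<forall>z\<in>L0 bs. dist (comp_seq f m y) (comp_seq f m z) < \<gamma>)"
      using bchoice[OF ex] by (elim exE) (erule that)
    have L0: "openin (top_of_set X) (L0 bs) \<and> L0 bs \<noteq> {} \<and> L0 bs \<subseteq> L bs \<and>
           (\<forall>m\<le>t. \<forall>y\<in>L0 bs. \<forall>z\<in>L0 bs. dist (comp_seq f m y) (comp_seq f m z) < \<gamma>)"
      if "length bs = n" for bs
      using L0all that by simp
    have L0o: "openin (top_of_set X) (L0 bs)" and L0ne: "L0 bs \<noteq> {}" and L0s: "L0 bs \<subseteq> L bs"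
      and L0d: "\<forall>m\<le>t. \<forall>y\<in>L0 bs. \<forall>z\<in>L0 bs. dist (comp_seq f m y) (comp_seq f m z) < \<gamma>"
      if "length bs = n" for bs using L0[OF that] by auto
    have LV: "L bs \<subseteq> V" if "length bs = n" for bs using PL that by blast
    have fam: "finite (L0 ` ?B) \<and> (\<forall>U\<in>L0 ` ?B. openin (top_of_set X) U \<and> U \<noteq> {} \<and> U \<subseteq> V)"
    proof
      show "finite (L0 ` ?B)" using finB by (rule finite_imageI)
      show "\<forall>U\<in>L0 ` ?B. openin (top_of_set X) U \<and> U \<noteq> {} \<and> U \<subseteq> V"
      proof
        fix U assume "U \<in> L0 ` ?B"
        then obtain bs where "length bs = n" "U = L0 bs" by blast
        then show "openin (top_of_set X) U \<and> U \<noteq> {} \<and> U \<subseteq> V" using L0o[of bs] L0ne[of bs] L0s[of bs] LV[of bs] by blast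
      qed
    qed
    have "\<exists>n\<ge>1. \<forall>U\<in>L0 ` ?B. comp_seq f n ` U \<inter> W0 \<noteq> {} \<and> comp_seq f n ` U \<inter> W1 \<noteq> {}"
      using good fam unfolding good_set_def by (elim allE impE) 
    then obtain t' where t'1: "t' \<ge> 1" and meet: "\<forall>U\<in>L0 ` ?B. comp_seq f t' ` U \<inter> W0 \<noteq> {} \<and> comp_seq f t' ` U \<inter> W1 \<noteq> {}"
      by blast
    have meet': "comp_seq f t' ` L0 bs \<inter> W0 \<noteq> {} \<and> comp_seq f t' ` L0 bs \<inter> W1 \<noteq> {}" if "length bs = n" for bs
      using bspec[OF meet, of "L0 bs"] that by simp
    have m0: "\<exists>y\<in>L0 bs. comp_seq f t' y \<in> W0" and m1: "\<exists>y\<in>L0 bs. comp_seq f t' y \<in> W1" if "length bs = n" for bs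
      using meet'[OF that] by auto
    have tt': "t < t'"
    proof (rule ccontr)
      assume "\<not> t < t'"
      then have le: "t' \<le> t" by simp
      let ?bs = "replicate n True"
      have len: "length ?bs = n" by simp
      obtain y where y: "y \<in> L0 ?bs" "comp_seq f t' y \<in> W0" using m0[OF len] by blast
      obtain z where z: "z \<in> L0 ?bs" "comp_seq f t' z \<in> W1" using m1[OF len] by blast
      note yz = y z
      have "dist (comp_seq f t' y) (comp_seq f t' z) < \<gamma>" using L0d[OF len] le y(1) z(1) by blast
      moreover have "\<gamma> \<le> dist (comp_seq f t' y) (comp_seq f t' z)" using gap y(2) z(2) by blast
      ultimately show False by simp
    qed
    define L' where "L' = (\<lambda>cs. L0 (butlast cs) \<inter> (X \<inter> comp_seq f t' -` (if last cs then W1 else W0)))"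
    have "P (Suc n) (t', L')" unfolding P_def
    proof (intro allI impI)
      fix cs :: "bool list" assume len: "length cs = Suc n"
      then have lb: "length (butlast cs) = n" by simp
      have o1: "openin (top_of_set X) (X \<inter> comp_seq f t' -` (if last cs then W1 else W0))"
        by (rule continuous_openin_preimage_gen[OF comp_seq_cont[OF cont into]]) (use W in auto)
      have o: "openin (top_of_set X) (L' cs)" unfolding L'_def using L0o[OF lb] o1 by (rule openin_Int)
      have L0X: "L0 (butlast cs) \<subseteq> X" using openin_imp_subset[OF L0o[OF lb]] by simp
      have "L' cs \<noteq> {}"
      proof (cases "last cs")
        case True
        obtain y where y: "y \<in> L0 (butlast cs)" "comp_seq f t' y \<in> W1" using m1[OF lb] by blast
        have "y \<in> L' cs" unfolding L'_def using True L0X y by auto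
        then show ?thesis by blast
      next
        case False
        obtain y where y: "y \<in> L0 (butlast cs)" "comp_seq f t' y \<in> W0" using m0[OF lb] by blast
        have "y \<in> L' cs" unfolding L'_def using False L0X y by auto
        then show ?thesis by blast
      qed
      moreover have "L' cs \<subseteq> V" unfolding L'_def using L0s[OF lb] LV[OF lb] by blast
      ultimately show "openin (top_of_set X) (snd (t', L') cs) \<and> snd (t', L') cs \<noteq> {} \<and> snd (t', L') cs \<subseteq> V"
        using o by simp
    qed
    moreover have "Q n st (t', L')" unfolding Q_def st
    proof (simp only: fst_conv snd_conv, intro conjI allI impI)
      show "t < t'" by (rule tt')
      fix bs b assume len: "length (bs :: bool list) = n"
      show "L' (bs @ [b]) \<subseteq> L bs" unfolding L'_def using L0s[OF len] by auto
      show "comp_seq f t' ` L' (bs @ [b]) \<subseteq> (if b then W1 else W0)" unfolding L'_def by auto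
    qed
    ultimately show ?thesis by blast
  qed
  obtain st where st: "\<And>n. P n (st n) \<and> Q n (st n) (st (Suc n))"
    using dependent_nat_choice[of P Q, OF P0 step] by blast
  define a where "a = (\<lambda>n. fst (st n))"
  have sm: "strict_mono a" unfolding strict_mono_Suc_iff a_def using st unfolding Q_def by blast
  have nest: "snd (st n) bs \<subseteq> snd (st m) (take m bs)" if "m \<le> n" "length bs = n" for m n bs
    using that
  proof (induction n arbitrary: bs)
    case 0 then show ?case by simp
  next
    case (Suc n)
    show ?case
    proof (cases "m = Suc n")
      case True then show ?thesis using Suc.prems by simp
    next
      case False
      then have mn: "m \<le> n" using Suc.prems by simp
      have bs: "bs = butlast bs @ [last bs]" using Suc.prems(2)
        by (intro append_butlast_last_id[symmetric]) auto
      have lb: "length (butlast bs) = n" using Suc.prems by simp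
      have "snd (st (Suc n)) bs = snd (st (Suc n)) (butlast bs @ [last bs])" using bs by simp
      also have "\<dots> \<subseteq> snd (st n) (butlast bs)" using st[of n] lb unfolding Q_def by blast
      also have "\<dots> \<subseteq> snd (st m) (take m (butlast bs))" using Suc.IH[OF mn lb] .
      also have "take m (butlast bs) = take m bs" using mn lb Suc.prems(2) by (simp add: take_butlast)
      finally show ?thesis .
    qed
  qed
  have indep: "\<exists>x\<in>X. \<forall>i\<in>{1..n}. comp_seq f (a i) x \<in> (if s i then W1 else W0)" for n s
  proof -
    define bs where "bs = map s [1..<Suc n]"
    have len: "length bs = n" unfolding bs_def by simp
    obtain x where x: "x \<in> snd (st n) bs" using st[of n] len unfolding P_def by blast
    have xX: "x \<in> X" using st[of n] len x VX unfolding P_def by blast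
    have "comp_seq f (a i) x \<in> (if s i then W1 else W0)" if i: "i \<in> {1..n}" for i
    proof -
      have u1: "take i [1..<Suc n] = [1..<1+i]" using i by (intro take_upt) simp
      have u2: "[1..<1+i] = [1..<i] @ [i]" using i by simp
      have tk: "take i bs = map s [1..<i] @ [s i]" unfolding bs_def take_map u1 u2 by simp
      have x1: "x \<in> snd (st i) (take i bs)" using nest[of i n bs] i len x by auto
      obtain j where j: "i = Suc j" using i by (cases i) auto
      have lj: "length (map s [1..<i]) = j" using j by simp
      have "comp_seq f (fst (st (Suc j))) ` snd (st (Suc j)) (map s [1..<i] @ [s i]) \<subseteq> (if s i then W1 else W0)"
        using st[of j] lj unfolding Q_def by blast
      then show ?thesis using x1 tk j unfolding a_def by auto
    qed
    then show ?thesis using xX by blast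
  qed
  have ind2: "\<forall>n s. \<exists>x\<in>X. \<forall>i\<in>{1..n}. comp_seq f (a i) x \<in> (if s i then W1 else W0)"
    by (intro allI) (rule indep)
  show ?thesis by (rule exI[of _ a], rule conjI[OF sm ind2])
qed



definition failp :: "(nat \<Rightarrow> 'a \<Rightarrow> 'a) \<Rightarrow> 'a set \<Rightarrow> 'a set \<Rightarrow> 'a set \<Rightarrow> nat \<Rightarrow> bool" where
  "failp f A B U n \<longleftrightarrow> comp_seq f n ` U \<inter> A = {} \<or> comp_seq f n ` U \<inter> B = {}"

lemma failp_mono: "W \<subseteq> U \<Longrightarrow> failp f A B U n \<Longrightarrow> failp f A B W n"
  unfolding failp_def by blast

lemma not_good:
  assumes "\<not> good_set X f A B V"
  shows "\<exists>Fam. finite Fam \<and> (\<forall>U\<in>Fam. openin (top_of_set X) U \<and> U \<noteq> {} \<and> U \<subseteq> V) \<and>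
           (\<forall>n\<ge>1. \<exists>U\<in>Fam. failp f A B U n)"
proof -
  from assms obtain Fam where F1a: "finite Fam" and F1b: "\<forall>U\<in>Fam. openin (top_of_set X) U \<and> U \<noteq> {} \<and> U \<subseteq> V"
    and F2: "\<not> (\<exists>n\<ge>1. \<forall>U\<in>Fam. comp_seq f n ` U \<inter> A \<noteq> {} \<and> comp_seq f n ` U \<inter> B \<noteq> {})"
    unfolding good_set_def not_all not_imp by (elim exE conjE) (rule that; assumption)
  have "\<exists>U\<in>Fam. failp f A B U n" if n: "n \<ge> 1" for n
  proof -
    have "\<not> (\<forall>U\<in>Fam. comp_seq f n ` U \<inter> A \<noteq> {} \<and> comp_seq f n ` U \<inter> B \<noteq> {})" using F2 n by blast
    then obtain U where "U \<in> Fam" "\<not> (comp_seq f n ` U \<inter> A \<noteq> {} \<and> comp_seq f n ` U \<inter> B \<noteq> {})" by blast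
    then show ?thesis unfolding failp_def by blast
  qed
  then show ?thesis using F1a F1b by blast
qed

lemma fam_induct:
  assumes "finite Q"
    and H: "\<forall>p\<in>Q. \<forall>V. openin (top_of_set X) V \<and> V \<noteq> {} \<longrightarrow> \<not> good_set X f (A p) (B p) V"
    and "openin (top_of_set X) V" "V \<noteq> {}"
  shows "\<exists>Fam. finite Fam \<and> (\<forall>U\<in>Fam. openin (top_of_set X) U \<and> U \<noteq> {} \<and> U \<subseteq> V) \<and>
           (\<forall>n\<ge>1. \<exists>U\<in>Fam. \<forall>q\<in>Q. failp f (A q) (B q) U n)"
  using assms
proof (induction Q arbitrary: V rule: finite_induct)
  case empty
  show ?case by (rule exI[of _ "{V}"]) (use empty.prems in auto)
next
  case (insert p Q)
  have "\<not> good_set X f (A p) (B p) V" using insert.prems by blast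
  from not_good[OF this] obtain Fam where Fam: "finite Fam" "\<forall>U\<in>Fam. openin (top_of_set X) U \<and> U \<noteq> {} \<and> U \<subseteq> V"
    "\<forall>n\<ge>1. \<exists>U\<in>Fam. failp f (A p) (B p) U n" by blast
  have HQ: "\<forall>p\<in>Q. \<forall>V. openin (top_of_set X) V \<and> V \<noteq> {} \<longrightarrow> \<not> good_set X f (A p) (B p) V"
    using insert.prems(1) by blast
  have "\<forall>U\<in>Fam. \<exists>G. finite G \<and> (\<forall>W\<in>G. openin (top_of_set X) W \<and> W \<noteq> {} \<and> W \<subseteq> U) \<and>
           (\<forall>n\<ge>1. \<exists>W\<in>G. \<forall>q\<in>Q. failp f (A q) (B q) W n)"
  proof
    fix U assume "U \<in> Fam"
    then have "openin (top_of_set X) U" "U \<noteq> {}" using Fam(2) by blast+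
    from insert.IH[OF HQ this] show "\<exists>G. finite G \<and> (\<forall>W\<in>G. openin (top_of_set X) W \<and> W \<noteq> {} \<and> W \<subseteq> U) \<and>
           (\<forall>n\<ge>1. \<exists>W\<in>G. \<forall>q\<in>Q. failp f (A q) (B q) W n)" .
  qed
  note ex = this
  obtain G where G: "\<forall>U\<in>Fam. finite (G U) \<and> (\<forall>W\<in>G U. openin (top_of_set X) W \<and> W \<noteq> {} \<and> W \<subseteq> U) \<and>
           (\<forall>n\<ge>1. \<exists>W\<in>G U. \<forall>q\<in>Q. failp f (A q) (B q) W n)"
    using bchoice[OF ex] by (elim exE) (erule that)
  have G1: "finite (G U)" if "U \<in> Fam" for U using bspec[OF G that] by (rule conjunct1)
  have G2: "openin (top_of_set X) W \<and> W \<noteq> {} \<and> W \<subseteq> U" if "U \<in> Fam" "W \<in> G U" for U W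
    using bspec[OF conjunct1[OF conjunct2[OF bspec[OF G that(1)]]] that(2)] .
  have G3: "\<forall>n\<ge>1. \<exists>W\<in>G U. \<forall>q\<in>Q. failp f (A q) (B q) W n" if "U \<in> Fam" for U
    using conjunct2[OF conjunct2[OF bspec[OF G that]]] .
  show ?case
  proof (rule exI[of _ "\<Union>(G ` Fam)"], intro conjI)
    show "finite (\<Union>(G ` Fam))" using Fam(1) G1 by (intro finite_UN_I)
    show "\<forall>W\<in>\<Union>(G ` Fam). openin (top_of_set X) W \<and> W \<noteq> {} \<and> W \<subseteq> V"
    proof
      fix W assume "W \<in> \<Union>(G ` Fam)"
      then obtain U where U: "U \<in> Fam" "W \<in> G U" by blast
      then have "openin (top_of_set X) W \<and> W \<noteq> {} \<and> W \<subseteq> U" by (rule G2)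
      moreover have "U \<subseteq> V" using Fam(2) U(1) by blast
      ultimately show "openin (top_of_set X) W \<and> W \<noteq> {} \<and> W \<subseteq> V" by blast
    qed
    show "\<forall>n\<ge>1. \<exists>W\<in>\<Union>(G ` Fam). \<forall>q\<in>insert p Q. failp f (A q) (B q) W n"
    proof (intro allI impI)
      fix n :: nat assume n: "n \<ge> 1"
      obtain U where U: "U \<in> Fam" "failp f (A p) (B p) U n" using Fam(3) n by blast
      have "\<forall>n\<ge>1. \<exists>W\<in>G U. \<forall>q\<in>Q. failp f (A q) (B q) W n" using G3 U(1) by blast
      then obtain W where W: "W \<in> G U" "\<forall>q\<in>Q. failp f (A q) (B q) W n" using n by blast
      have "W \<subseteq> U" using G2[OF U(1) W(1)] by blast
      then have "failp f (A p) (B p) W n" using failp_mono U(2) by blast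
      then have "\<forall>q\<in>insert p Q. failp f (A q) (B q) W n" using W(2) by blast
      then show "\<exists>W\<in>\<Union>(G ` Fam). \<forall>q\<in>insert p Q. failp f (A q) (B q) W n" using W(1) U(1) by blast
    qed
  qed
qed

lemma diameter_gt_ex:
  fixes S :: "'a::metric_space set"
  assumes "diameter S > \<delta>" "\<delta> > 0"
  shows "\<exists>u\<in>S. \<exists>v\<in>S. dist u v > \<delta>"
proof (rule ccontr)
  assume "\<not> ?thesis"
  then have le: "\<forall>u\<in>S. \<forall>v\<in>S. dist u v \<le> \<delta>" by (simp add: not_less)
  have "diameter S \<le> \<delta>"
  proof (cases "S = {}")
    case True then show ?thesis using assms(2) by simp
  next
    case False
    then have "S \<times> S \<noteq> {}" by simp
    then have "(SUP (x,y)\<in>S\<times>S. dist x y) \<le> \<delta>" using le by (intro cSUP_least) auto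
    then show ?thesis using False unfolding diameter_def by simp
  qed
  then show False using assms(1) by simp
qed



lemma good_exists:
  fixes X :: "'a::metric_space set" and f :: "nat \<Rightarrow> 'a \<Rightarrow> 'a"
  assumes cpt: "compact X" and ne: "X \<noteq> {}"
    and cont: "\<And>n. continuous_on X (f n)" and into: "\<And>n. f n ` X \<subseteq> X"
    and ms: "multi_sensitive X f"
  shows "\<exists>W0 W1 \<gamma> V. open W0 \<and> open W1 \<and> \<gamma> > 0 \<and> (\<forall>x\<in>W0. \<forall>y\<in>W1. \<gamma> \<le> dist x y) \<and>
            openin (top_of_set X) V \<and> V \<noteq> {} \<and> good_set X f W0 W1 V" (is "?G")
proof (rule ccontr)
  assume contra: "\<not> ?G"
  obtain \<delta> where d0: "\<delta> > 0" and msd: "\<forall>k\<ge>1. \<forall>V :: nat \<Rightarrow> 'a set.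
        (\<forall>i\<in>{1..k}. openin (top_of_set X) (V i) \<and> V i \<noteq> {}) \<longrightarrow>
        (\<exists>n\<ge>1. \<forall>i\<in>{1..k}. diameter (comp_seq f n ` V i) > \<delta>)"
    using ms unfolding multi_sensitive_def by blast
  have tb: "\<forall>e>0. \<exists>k. finite k \<and> k \<subseteq> X \<and> X \<subseteq> (\<Union>x\<in>k. ball x e)"
    by (rule seq_compact_imp_totally_bounded[OF compact_imp_seq_compact[OF cpt]])
  have d4: "\<delta>/4 > 0" using d0 by simp
  obtain C where C: "finite C" "X \<subseteq> (\<Union>x\<in>C. ball x (\<delta>/4))"
    using tb[rule_format, OF d4] by (elim exE conjE) (rule that; assumption)
  define B0 where "B0 = (\<lambda>p :: 'a \<times> 'a. ball (fst p) (\<delta>/4))"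
  define B1 where "B1 = (\<lambda>p :: 'a \<times> 'a. ball (snd p) (\<delta>/4))"
  define Pr where "Pr = {p \<in> C \<times> C. \<delta>/2 < dist (fst p) (snd p)}"
  have "Pr \<subseteq> C \<times> C" unfolding Pr_def by blast
  then have finPr: "finite Pr" by (rule finite_subset) (simp add: C(1))
  have H: "\<forall>p\<in>Pr. \<forall>V. openin (top_of_set X) V \<and> V \<noteq> {} \<longrightarrow> \<not> good_set X f (B0 p) (B1 p) V"
  proof (intro ballI allI impI notI)
    fix p V assume p: "p \<in> Pr" and V: "openin (top_of_set X) V \<and> V \<noteq> {}" and g: "good_set X f (B0 p) (B1 p) V"
    define \<gamma> where "\<gamma> = dist (fst p) (snd p) - \<delta>/2"
    have gp: "\<gamma> > 0" using p unfolding Pr_def \<gamma>_def by simp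
    have gap: "\<forall>x\<in>B0 p. \<forall>y\<in>B1 p. \<gamma> \<le> dist x y"
    proof (intro ballI)
      fix x y assume "x \<in> B0 p" "y \<in> B1 p"
      then have "dist (fst p) x < \<delta>/4" "dist (snd p) y < \<delta>/4" unfolding B0_def B1_def by auto
      moreover have "dist (fst p) (snd p) \<le> dist (fst p) x + dist x (snd p)" by (rule dist_triangle)
      moreover have "dist x (snd p) \<le> dist x y + dist y (snd p)" by (rule dist_triangle)
      ultimately show "\<gamma> \<le> dist x y" unfolding \<gamma>_def by (simp add: dist_commute)
    qed
    have "open (B0 p)" "open (B1 p)" unfolding B0_def B1_def by simp_all
    then have all: "open (B0 p) \<and> open (B1 p) \<and> \<gamma> > 0 \<and> (\<forall>x\<in>B0 p. \<forall>y\<in>B1 p. \<gamma> \<le> dist x y) \<and>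
            openin (top_of_set X) V \<and> V \<noteq> {} \<and> good_set X f (B0 p) (B1 p) V"
      using gp gap V g by (intro conjI) auto
    have ?G by (rule exI[of _ "B0 p"], rule exI[of _ "B1 p"], rule exI[of _ \<gamma>], rule exI[of _ V], rule all)
    then show False using contra by contradiction
  qed
  have "openin (top_of_set X) X" by simp
  from fam_induct[OF finPr H this ne] obtain Fam where Fam: "finite Fam"
    "\<forall>U\<in>Fam. openin (top_of_set X) U \<and> U \<noteq> {} \<and> U \<subseteq> X"
    "\<forall>n\<ge>1. \<exists>U\<in>Fam. \<forall>q\<in>Pr. failp f (B0 q) (B1 q) U n" by blast
  have "Fam \<noteq> {}" using Fam(3) by force
  then have k1: "card Fam \<ge> 1" using Fam(1) by (simp add: Suc_leI card_gt_0_iff)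
  obtain h where h: "bij_betw h {1..card Fam} Fam" using ex_bij_betw_nat_finite_1[OF Fam(1)] by blast
  have hV: "\<forall>i\<in>{1..card Fam}. openin (top_of_set X) (h i) \<and> h i \<noteq> {}"
    using Fam(2) bij_betw_apply[OF h] by blast
  obtain n where n1: "n \<ge> 1" and diam: "\<forall>i\<in>{1..card Fam}. diameter (comp_seq f n ` h i) > \<delta>"
    using msd k1 hV by blast
  obtain U where U: "U \<in> Fam" "\<forall>q\<in>Pr. failp f (B0 q) (B1 q) U n" using Fam(3) n1 by blast
  obtain i where i: "i \<in> {1..card Fam}" "U = h i" using U(1) h unfolding bij_betw_def by blast
  have "diameter (comp_seq f n ` U) > \<delta>" using diam i by blast
  from diameter_gt_ex[OF this d0] obtain u v where uv: "u \<in> comp_seq f n ` U" "v \<in> comp_seq f n ` U" "dist u v > \<delta>"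
    by blast
  have UX: "U \<subseteq> X" using Fam(2) U(1) by blast
  have "comp_seq f n ` U \<subseteq> X" using comp_seq_into[of f X n] into UX by blast
  then have "u \<in> X" "v \<in> X" using uv by blast+
  then obtain c c' where c: "c \<in> C" "u \<in> ball c (\<delta>/4)" and c': "c' \<in> C" "v \<in> ball c' (\<delta>/4)" using C(2) by blast
  have "dist u v \<le> dist u c + dist c v" by (rule dist_triangle)
  moreover have "dist c v \<le> dist c c' + dist c' v" by (rule dist_triangle)
  moreover have "dist c u < \<delta>/4" "dist c' v < \<delta>/4" using c(2) c'(2) by auto
  ultimately have "\<delta>/2 < dist c c'" using uv(3) by (simp add: dist_commute)
  then have p: "(c, c') \<in> Pr" unfolding Pr_def using c(1) c'(1) by simp
  have "u \<in> comp_seq f n ` U \<inter> B0 (c, c')" "v \<in> comp_seq f n ` U \<inter> B1 (c, c')"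
    using uv c c' unfolding B0_def B1_def by auto
  then have "\<not> failp f (B0 (c, c')) (B1 (c, c')) U n" unfolding failp_def by blast
  then show False using U(2) p by blast
qed



lemma meas_R:
  assumes "continuous_on X h" "h ` X \<subseteq> X"
  shows "h \<in> measurable (restrict_space borel X) (restrict_space borel X)"
proof (rule measurable_restrict_space2)
  show "h \<in> space (restrict_space borel X) \<rightarrow> X" using assms(2) by (auto simp: space_restrict_space)
  show "h \<in> borel_measurable (restrict_space borel X)"
    by (rule borel_measurable_continuous_on_restrict[OF assms(1)])
qed

lemma meas_R_mu:
  assumes "continuous_on X h" "h ` X \<subseteq> X" "sets \<mu> = sets (restrict_space borel X)"
  shows "h \<in> measurable \<mu> (restrict_space borel X)"
proof -
  have "measurable \<mu> (restrict_space borel X) = measurable (restrict_space borel X) (restrict_space borel X)"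
    by (rule measurable_cong_sets[OF assms(3) refl])
  then show ?thesis using meas_R[OF assms(1,2)] by simp
qed

lemma induced_into:
  assumes "continuous_on X (f n)" "f n ` X \<subseteq> X" "\<mu> \<in> prob_measures X"
  shows "induced_maps X f n \<mu> \<in> prob_measures X"
proof -
  have p: "prob_space \<mu>" and s: "sets \<mu> = sets (restrict_space borel X)" using assms(3) unfolding prob_measures_def by auto
  have m: "f n \<in> measurable \<mu> (restrict_space borel X)" by (rule meas_R_mu[OF assms(1,2) s])
  have "prob_space (distr \<mu> (restrict_space borel X) (f n))" by (rule prob_space.prob_space_distr[OF p m])
  then show ?thesis unfolding prob_measures_def induced_maps_def by simp
qed

lemma induced_comp:
  assumes cont: "\<And>n. continuous_on X (f n)" and into: "\<And>n. f n ` X \<subseteq> X" and mu: "\<mu> \<in> prob_measures X"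
  shows "comp_seq (induced_maps X f) m \<mu> = distr \<mu> (restrict_space borel X) (comp_seq f m)"
proof (induction m)
  case 0
  have s: "sets \<mu> = sets (restrict_space borel X)" using mu unfolding prob_measures_def by auto
  have "distr \<mu> (restrict_space borel X) (\<lambda>x. x) = \<mu>" by (rule distr_id2[OF s[symmetric]])
  then show ?case by (simp add: id_def)
next
  case (Suc m)
  have s: "sets \<mu> = sets (restrict_space borel X)" using mu unfolding prob_measures_def by auto
  have m1: "f m \<in> measurable (restrict_space borel X) (restrict_space borel X)" by (rule meas_R[OF cont into])
  have m2: "comp_seq f m \<in> measurable \<mu> (restrict_space borel X)"
    by (rule meas_R_mu[OF comp_seq_cont[OF cont into] comp_seq_into[OF into] s])
  have "comp_seq (induced_maps X f) (Suc m) \<mu> = induced_maps X f m (distr \<mu> (restrict_space borel X) (comp_seq f m))"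
    using Suc by simp
  also have "\<dots> = distr (distr \<mu> (restrict_space borel X) (comp_seq f m)) (restrict_space borel X) (f m)"
    unfolding induced_maps_def ..
  also have "\<dots> = distr \<mu> (restrict_space borel X) (f m \<circ> comp_seq f m)" by (rule distr_distr[OF m1 m2])
  finally show ?case by (simp add: comp_def)
qed

lemma weak_topspace: "topspace (weak_star_topology X) = prob_measures X"
proof -
  let ?S = "{{\<mu> \<in> prob_measures X. (\<integral>x. g x \<partial>\<mu>) \<in> W} | g W. continuous_on X (g :: 'a \<Rightarrow> real) \<and> open W}"
  have "\<Union>?S \<subseteq> prob_measures X" by blast
  moreover have "prob_measures X \<in> ?S"
  proof -
    have "prob_measures X = {\<mu> \<in> prob_measures X. (\<integral>x. (\<lambda>_. 0::real) x \<partial>\<mu>) \<in> UNIV}" by simp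
    moreover have "continuous_on X (\<lambda>_::'a. 0::real) \<and> open (UNIV :: real set)" by (simp add: continuous_on_const)
    ultimately show ?thesis by blast
  qed
  ultimately have "\<Union>?S = prob_measures X" by blast
  then show ?thesis unfolding weak_star_topology_def by simp
qed

lemma weak_open:
  fixes g :: "'a::metric_space \<Rightarrow> real"
  assumes "continuous_on X g" "open W"
  shows "openin (weak_star_topology X) {\<mu> \<in> prob_measures X. (\<integral>x. g x \<partial>\<mu>) \<in> W}"
  unfolding weak_star_topology_def openin_topology_generated_by_iff
  by (rule generate_topology_on.Basis) (use assms in blast)

lemma sum_count:
  assumes "k \<le> N"
  shows "(\<Sum>l\<in>{1..N}. (if l \<le> k then 1 else 0 :: real)) = real k"
proof -
  have "(\<Sum>l\<in>{1..N}. (if l \<le> k then 1 else 0 :: real)) = (\<Sum>l\<in>{l\<in>{1..N}. l \<le> k}. 1)"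
    by (rule sum.inter_filter[symmetric]) simp
  also have "{l\<in>{1..N}. l \<le> k} = {1..k}" using assms by auto
  finally show ?thesis by simp
qed



lemma grid_sep:
  fixes N :: nat
  assumes N: "N \<ge> 1"
    and W: "W \<in> insert {..<0::real} (insert {1<..} ((\<lambda>k. ball (real k / real N) (1 / real N)) ` {0..N}))"
    and jk: "j \<le> N" "k \<le> N" and m: "real j / real N \<in> W" "real k / real N \<in> W"
  shows "j = k"
proof -
  have Np: "real N > 0" using N by simp
  have j01: "0 \<le> real j / real N" "real j / real N \<le> 1" using jk Np by (auto simp: divide_le_eq_1)
  have k01: "0 \<le> real k / real N" "real k / real N \<le> 1" using jk Np by (auto simp: divide_le_eq_1)
  consider "W = {..<0}" | "W = {1<..}" | c where "c \<in> {0..N}" "W = ball (real c / real N) (1 / real N)"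
    using W by blast
  then show ?thesis
  proof cases
    case 1 then show ?thesis using m j01 by simp
  next
    case 2 then show ?thesis using m j01 by simp
  next
    case 3
    have "dist (real c / real N) (real j / real N) < 1 / real N" using m(1) 3 by simp
    then have "\<bar>real c - real j\<bar> / real N < 1 / real N" using Np
      by (simp add: dist_real_def diff_divide_distrib[symmetric])
    then have "\<bar>real c - real j\<bar> < 1" using Np by (simp add: divide_less_cancel)
    then have cj: "c = j" by linarith
    have "dist (real c / real N) (real k / real N) < 1 / real N" using m(2) 3 by simp
    then have "\<bar>real c - real k\<bar> / real N < 1 / real N" using Np
      by (simp add: dist_real_def diff_divide_distrib[symmetric])
    then have "\<bar>real c - real k\<bar> < 1" using Np by (simp add: divide_less_cancel)
    then have ck: "c = k" by linarith
    show ?thesis using cj ck by simp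
  qed
qed

lemma grid_cover:
  fixes N :: nat
  assumes N: "N \<ge> 1"
  shows "\<exists>W\<in>insert {..<0::real} (insert {1<..} ((\<lambda>k. ball (real k / real N) (1 / real N)) ` {0..N})). r \<in> W"
proof (cases "r < 0 \<or> r > 1")
  case True then show ?thesis by auto
next
  case False
  then have r: "0 \<le> r" "r \<le> 1" by auto
  have Np: "real N > 0" using N by simp
  define k where "k = nat \<lfloor>r * real N\<rfloor>"
  have fl: "real_of_int \<lfloor>r * real N\<rfloor> \<le> r * real N" "r * real N < real_of_int \<lfloor>r * real N\<rfloor> + 1"
    by linarith+
  have nn: "0 \<le> \<lfloor>r * real N\<rfloor>" using r Np by simp
  have kr: "real k = real_of_int \<lfloor>r * real N\<rfloor>" unfolding k_def using nn by simp
  have "r * real N \<le> real N" using r Np by simp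
  then have "\<lfloor>r * real N\<rfloor> \<le> int N" by linarith
  then have kN: "k \<le> N" unfolding k_def by simp
  have "\<bar>r * real N - real k\<bar> < 1" using fl kr by linarith
  then have "\<bar>r - real k / real N\<bar> < 1 / real N" using Np
    by (simp add: field_simps abs_less_iff)
  then have "r \<in> ball (real k / real N) (1 / real N)" by (simp add: dist_real_def abs_minus_commute)
  then show ?thesis using kN by auto
qed

lemma ereal_inf_from_ln:
  fixes e :: ereal
  assumes "\<And>N::nat. N \<ge> 1 \<Longrightarrow> ereal (ln (real N + 1)) \<le> e"
  shows "e = \<infinity>"
proof (rule ccontr)
  assume ne: "e \<noteq> \<infinity>"
  have "ereal (ln (real 1 + 1)) \<le> e" by (rule assms) simp
  then have "e \<noteq> -\<infinity>" by auto
  with ne obtain r where r: "e = ereal r" by (cases e) auto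
  define N where "N = nat \<lceil>exp r\<rceil> + 1"
  have N1: "N \<ge> 1" unfolding N_def by simp
  have c: "exp r \<le> real_of_int \<lceil>exp r\<rceil>" by (rule le_of_int_ceiling)
  have "- 1 < exp r" using exp_gt_zero[of r] by linarith
  then have "0 \<le> \<lceil>exp r\<rceil>" by (simp only: zero_le_ceiling)
  then have "real N = real_of_int \<lceil>exp r\<rceil> + 1" unfolding N_def by simp
  then have "exp r < real N + 1" using c by linarith
  then have "ln (exp r) < ln (real N + 1)" by (subst ln_less_cancel_iff) auto
  then have "r < ln (real N + 1)" by simp
  moreover have "ln (real N + 1) \<le> r" using assms[OF N1] r by simp
  ultimately show False by simp
qed



theorem theorem6p1:
  fixes X :: "'a::metric_space set" and f :: "nat \<Rightarrow> 'a \<Rightarrow> 'a"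
  assumes "compact X" and "X \<noteq> {}"
    and "\<And>n. continuous_on X (f n)" and "\<And>n. f n ` X \<subseteq> X"
    and "f 0 ` X = X"
    and "multi_sensitive X f"
  shows "\<exists>a\<in>seqS.
           sup_seq_entropy (top_of_set X) f \<ge> seq_entropy (top_of_set X) f a \<and>
           seq_entropy (top_of_set X) f a \<ge> ereal (ln 2) \<and>
           seq_entropy (weak_star_topology X) (induced_maps X f) a = \<infinity> \<and>
           sup_seq_entropy (weak_star_topology X) (induced_maps X f) = \<infinity>"
proof -
  note cont = assms(3) and into = assms(4)
  obtain W0 W1 \<gamma> V where W: "open W0" "open W1" "\<gamma> > 0" and gap: "\<forall>x\<in>W0. \<forall>y\<in>W1. \<gamma> \<le> dist x y"
    and V: "openin (top_of_set X) V" "V \<noteq> {}" and good: "good_set X f W0 W1 V"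
    using good_exists[OF assms(1,2,3,4,6)] by (elim exE conjE) (rule that; assumption)
  have gap': "\<gamma> \<le> dist x y" if "x \<in> W0" "y \<in> W1" for x y using gap that by blast
  have ex: "\<exists>a::nat\<Rightarrow>nat. strict_mono a \<and> (\<forall>n s. \<exists>x\<in>X. \<forall>i\<in>{1..n}. comp_seq f (a i) x \<in> (if s i then W1 else W0))"
    by (rule tree[OF cont into W(1) W(2) W(3) _ V(1) V(2) good]) (rule gap'; assumption)
  obtain a :: "nat \<Rightarrow> nat" where sm: "strict_mono a"
    and ind: "\<forall>n s. \<exists>x\<in>X. \<forall>i\<in>{1..n}. comp_seq f (a i) x \<in> (if s i then W1 else W0)"
    using ex by (elim exE conjE) (rule that; assumption)
  have aS: "a \<in> seqS" unfolding seqS_def using sm by (simp add: strict_mono_def strict_mono_on_def)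
  define xp where "xp = (\<lambda>n s. SOME x. x \<in> X \<and> (\<forall>i\<in>{1..n}. comp_seq f (a i) x \<in> (if s i then W1 else W0)))"
  have xp_all: "xp n s \<in> X \<and> (\<forall>i\<in>{1..n}. comp_seq f (a i) (xp n s) \<in> (if s i then W1 else W0))" for n s
  proof -
    have e: "\<exists>x. x \<in> X \<and> (\<forall>i\<in>{1..n}. comp_seq f (a i) x \<in> (if s i then W1 else W0))"
      using ind[rule_format, of n s] by (simp only: Bex_def)
    show ?thesis unfolding xp_def by (rule someI_ex[OF e])
  qed
  have xpX: "xp n s \<in> X" for n s using xp_all by blast
  have xpW: "comp_seq f (a i) (xp n s) \<in> (if s i then W1 else W0)" if "i \<in> {1..n}" for n s i
    using xp_all[of n s] that by (elim conjE) (erule bspec)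
  have W0ne: "W0 \<noteq> {}" using xpW[of 1 1 "\<lambda>_. False"] by auto
  define g where "g = (\<lambda>x. min 1 (infdist x W0 / \<gamma>))"
  have g0: "g x = 0" if "x \<in> W0" for x unfolding g_def using that by simp
  have g1: "g y = 1" if "y \<in> W1" for y
  proof -
    have "\<gamma> \<le> (INF w\<in>W0. dist y w)"
    proof (rule cINF_greatest[OF W0ne])
      fix w assume "w \<in> W0"
      then show "\<gamma> \<le> dist y w" using gap'[of w y] that by (simp add: dist_commute)
    qed
    then have "\<gamma> \<le> infdist y W0" using infdist_notempty[OF W0ne] by simp
    then have "1 \<le> infdist y W0 / \<gamma>" using W(3) by simp
    then show ?thesis unfolding g_def by simp
  qed
  have gc: "continuous_on UNIV g" unfolding g_def using W(3) by (intro continuous_intros) auto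
  have gX: "continuous_on X g" using gc continuous_on_subset by blast
  have gval: "g (comp_seq f (a i) (xp n s)) = (if s i then 1 else 0)" if "i \<in> {1..n}" for n s i
  proof (cases "s i")
    case True then show ?thesis using xpW[OF that, of s] g1 by simp
  next
    case False then show ?thesis using xpW[OF that, of s] g0 by simp
  qed
  have sepI: "\<exists>i\<in>{1..n}. u i \<noteq> v i" if "u \<in> PiE {1..n} S" "v \<in> PiE {1..n} S" "u \<noteq> v" for n u v and S :: "nat \<Rightarrow> 'b set"
    using PiE_ext[OF that(1,2)] that(3) by blast
  define U1 where "U1 = {X \<inter> g -` {..<2/3}, X \<inter> g -` {1/3<..}}"
  have oc1: "open_cover (top_of_set X) U1"
    unfolding open_cover_def U1_def
  proof (intro conjI)
    show "finite {X \<inter> g -` {..<2/3}, X \<inter> g -` {1/3<..}}" by simp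
    have "openin (top_of_set X) (X \<inter> g -` {..<2/3})" by (rule continuous_openin_preimage_gen[OF gX]) simp
    moreover have "openin (top_of_set X) (X \<inter> g -` {1/3<..})" by (rule continuous_openin_preimage_gen[OF gX]) simp
    ultimately show "\<forall>u\<in>{X \<inter> g -` {..<2/3}, X \<inter> g -` {1/3<..}}. openin (top_of_set X) u" by simp
    show "\<Union>{X \<inter> g -` {..<2/3}, X \<inter> g -` {1/3<..}} = topspace (top_of_set X)" by auto
  qed
  have inv1: "f m ` topspace (top_of_set X) \<subseteq> topspace (top_of_set X)" for m using into by simp
  have top_cn: "2 ^ n \<le> real (cover_num (top_of_set X) (join_cover (top_of_set X) f a U1 n))" if "n \<ge> 1" for n
  proof -
    let ?I = "PiE {1..n} (\<lambda>_. UNIV :: bool set)"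
    have "card ?I \<le> cover_num (top_of_set X) (join_cover (top_of_set X) f a U1 n)"
    proof (rule cover_num_ge[OF oc1 inv1])
      show "finite ?I" by (rule finite_PiE) auto
      show "xp n ` ?I \<subseteq> topspace (top_of_set X)" using xpX by auto
      fix u v assume uv: "u \<in> ?I" "v \<in> ?I" "u \<noteq> v"
      obtain i where i: "i \<in> {1..n}" "u i \<noteq> v i" using sepI[OF uv] by blast
      have gu: "g (comp_seq f (a i) (xp n u)) = (if u i then 1 else 0)" by (rule gval[OF i(1)])
      have gv: "g (comp_seq f (a i) (xp n v)) = (if v i then 1 else 0)" by (rule gval[OF i(1)])
      have "\<forall>c\<in>U1. \<not> (comp_seq f (a i) (xp n u) \<in> c \<and> comp_seq f (a i) (xp n v) \<in> c)"
      proof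
        fix c assume "c \<in> U1"
        then have "c = X \<inter> g -` {..<2/3} \<or> c = X \<inter> g -` {1/3<..}" unfolding U1_def by simp
        then show "\<not> (comp_seq f (a i) (xp n u) \<in> c \<and> comp_seq f (a i) (xp n v) \<in> c)"
          using gu gv i(2) by (cases "u i") auto
      qed
      then show "\<exists>i\<in>{1..n}. \<forall>c\<in>U1. \<not> (comp_seq f (a i) (xp n u) \<in> c \<and> comp_seq f (a i) (xp n v) \<in> c)"
        using i(1) by blast
    qed
    moreover have "card ?I = 2 ^ n" by (simp add: card_PiE)
    ultimately have "2 ^ n \<le> cover_num (top_of_set X) (join_cover (top_of_set X) f a U1 n)" by simp
    then have "real (2 ^ n) \<le> real (cover_num (top_of_set X) (join_cover (top_of_set X) f a U1 n))"
      by (rule of_nat_mono)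
    then show ?thesis by simp
  qed
  have top_ent: "ereal (ln 2) \<le> seq_entropy (top_of_set X) f a"
    by (rule seq_entropy_ge[OF oc1 _ top_cn]) simp_all
  define R where "R = restrict_space borel X"
  have gR: "g \<in> borel_measurable R" unfolding R_def by (rule borel_measurable_continuous_on_restrict[OF gX])
  have inv2: "induced_maps X f m ` topspace (weak_star_topology X) \<subseteq> topspace (weak_star_topology X)" for m
    unfolding weak_topspace image_subset_iff by (intro ballI, rule induced_into[OF cont into])
  have weakN: "ereal (ln (real N + 1)) \<le> seq_entropy (weak_star_topology X) (induced_maps X f) a" if N1: "N \<ge> 1" for N :: nat
  proof -
    define Ws where "Ws = insert {..<0::real} (insert {1<..} ((\<lambda>k. ball (real k / real N) (1 / real N)) ` {0..N}))"
    define Oset where "Oset = (\<lambda>W. {\<mu> \<in> prob_measures X. (\<integral>x. g x \<partial>\<mu>) \<in> W})"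
    define U2 where "U2 = Oset ` Ws"
    have finWs: "finite Ws" unfolding Ws_def by simp
    have openWs: "open W" if "W \<in> Ws" for W using that unfolding Ws_def by auto
    have oc2: "open_cover (weak_star_topology X) U2"
      unfolding open_cover_def
    proof (intro conjI)
      show "finite U2" unfolding U2_def using finWs by (rule finite_imageI)
      show "\<forall>u\<in>U2. openin (weak_star_topology X) u"
      proof
        fix u assume "u \<in> U2"
        then obtain W where "W \<in> Ws" "u = Oset W" unfolding U2_def by blast
        then show "openin (weak_star_topology X) u" unfolding Oset_def using weak_open[OF gX openWs] by blast
      qed
      show "\<Union>U2 = topspace (weak_star_topology X)" unfolding weak_topspace
      proof
        show "\<Union>U2 \<subseteq> prob_measures X" unfolding U2_def Oset_def by blast
        show "prob_measures X \<subseteq> \<Union>U2"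
        proof
          fix \<mu> assume mu: "\<mu> \<in> prob_measures X"
          obtain W where "W \<in> Ws" "(\<integral>x. g x \<partial>\<mu>) \<in> W" using grid_cover[OF N1, of "\<integral>x. g x \<partial>\<mu>"] unfolding Ws_def by blast
          then show "\<mu> \<in> \<Union>U2" unfolding U2_def Oset_def using mu by blast
        qed
      qed
    qed
    define M0 where "M0 = uniform_count_measure {1..N}"
    have M0p: "prob_space M0" unfolding M0_def using N1 by (intro prob_space_uniform_count_measure) auto
    have M0m: "h \<in> measurable M0 R" if "h ` {1..N} \<subseteq> X" for h
    proof -
      have "measurable M0 R = measurable (count_space {1..N}) R"
        unfolding M0_def by (rule measurable_cong_sets[OF sets_uniform_count_measure_count_space refl])
      moreover have "space R = X" unfolding R_def by (simp add: space_restrict_space)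
      ultimately show ?thesis using that by auto
    qed
    define pt where "pt = (\<lambda>n (w :: nat \<Rightarrow> nat) (l :: nat). xp n (\<lambda>i. l \<le> w i))"
    define \<phi> where "\<phi> = (\<lambda>n w. distr M0 R (pt n w))"
    have ptX: "pt n w ` {1..N} \<subseteq> X" for n w unfolding pt_def using xpX by auto
    have phiP: "\<phi> n w \<in> prob_measures X" for n w
    proof -
      have "prob_space (\<phi> n w)" unfolding \<phi>_def by (rule prob_space.prob_space_distr[OF M0p M0m[OF ptX]])
      then show ?thesis unfolding prob_measures_def \<phi>_def R_def by simp
    qed
    have integ: "(\<integral>x. g x \<partial>(comp_seq (induced_maps X f) (a i) (\<phi> n w))) = real (w i) / real N"
      if i: "i \<in> {1..n}" and wN: "w i \<le> N" for n w i
    proof -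
      have Fm: "comp_seq f (a i) \<in> measurable R R" unfolding R_def
        by (rule meas_R[OF comp_seq_cont[OF cont into] comp_seq_into[OF into]])
      have "comp_seq (induced_maps X f) (a i) (\<phi> n w) = distr (\<phi> n w) R (comp_seq f (a i))"
        unfolding R_def by (rule induced_comp[OF cont into phiP])
      also have "\<dots> = distr M0 R (comp_seq f (a i) \<circ> pt n w)"
        unfolding \<phi>_def by (rule distr_distr[OF Fm M0m[OF ptX]])
      finally have eq: "comp_seq (induced_maps X f) (a i) (\<phi> n w) = distr M0 R (comp_seq f (a i) \<circ> pt n w)" .
      have cX: "(comp_seq f (a i) \<circ> pt n w) ` {1..N} \<subseteq> X"
      proof -
        have "comp_seq f (a i) ` X \<subseteq> X" by (rule comp_seq_into) (rule into)
        then show ?thesis using ptX[of n w] by auto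
      qed
      have "(\<integral>x. g x \<partial>(distr M0 R (comp_seq f (a i) \<circ> pt n w))) = (\<integral>l. g ((comp_seq f (a i) \<circ> pt n w) l) \<partial>M0)"
        by (rule integral_distr[OF M0m[OF cX] gR])
      also have "\<dots> = (\<Sum>l\<in>{1..N}. g ((comp_seq f (a i) \<circ> pt n w) l)) / real N"
        unfolding M0_def by (simp add: integral_uniform_count_measure)
      also have "(\<Sum>l\<in>{1..N}. g ((comp_seq f (a i) \<circ> pt n w) l)) = (\<Sum>l\<in>{1..N}. (if l \<le> w i then 1 else 0))"
      proof (rule sum.cong[OF refl])
        fix l assume "l \<in> {1..N}"
        show "g ((comp_seq f (a i) \<circ> pt n w) l) = (if l \<le> w i then 1 else 0)"
          unfolding pt_def comp_def using gval[OF i, of "\<lambda>i. l \<le> w i"] by simp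
      qed
      also have "\<dots> = real (w i)" by (rule sum_count[OF wN])
      finally show ?thesis using eq by (simp add: comp_def)
    qed
    have cn: "(real N + 1) ^ n \<le> real (cover_num (weak_star_topology X) (join_cover (weak_star_topology X) (induced_maps X f) a U2 n))" if "n \<ge> 1" for n
    proof -
      let ?I = "PiE {1..n} (\<lambda>_. {0..N})"
      have "card ?I \<le> cover_num (weak_star_topology X) (join_cover (weak_star_topology X) (induced_maps X f) a U2 n)"
      proof (rule cover_num_ge[OF oc2 inv2])
        show "finite ?I" by (rule finite_PiE) auto
        show "\<phi> n ` ?I \<subseteq> topspace (weak_star_topology X)" unfolding weak_topspace using phiP by auto
        fix u v assume uv: "u \<in> ?I" "v \<in> ?I" "u \<noteq> v"
        obtain i where i: "i \<in> {1..n}" "u i \<noteq> v i" using sepI[OF uv] by blast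
        have uN: "u i \<le> N" and vN: "v i \<le> N" using uv(1,2) i(1) by (auto simp: PiE_iff)
        have "\<forall>c\<in>U2. \<not> (comp_seq (induced_maps X f) (a i) (\<phi> n u) \<in> c \<and> comp_seq (induced_maps X f) (a i) (\<phi> n v) \<in> c)"
        proof (intro ballI notI)
          fix c assume c: "c \<in> U2" and both: "comp_seq (induced_maps X f) (a i) (\<phi> n u) \<in> c \<and> comp_seq (induced_maps X f) (a i) (\<phi> n v) \<in> c"
          obtain W where W: "W \<in> Ws" "c = Oset W" using c unfolding U2_def by blast
          have "(\<integral>x. g x \<partial>(comp_seq (induced_maps X f) (a i) (\<phi> n u))) \<in> W"
               "(\<integral>x. g x \<partial>(comp_seq (induced_maps X f) (a i) (\<phi> n v))) \<in> W"
            using both W(2) unfolding Oset_def by auto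
          then have "real (u i) / real N \<in> W" "real (v i) / real N \<in> W"
            using integ[of i n u, OF i(1) uN] integ[of i n v, OF i(1) vN] by simp_all
          then have "u i = v i" using grid_sep[OF N1 W(1)[unfolded Ws_def] uN vN] by blast
          then show False using i(2) by simp
        qed
        then show "\<exists>i\<in>{1..n}. \<forall>c\<in>U2. \<not> (comp_seq (induced_maps X f) (a i) (\<phi> n u) \<in> c \<and> comp_seq (induced_maps X f) (a i) (\<phi> n v) \<in> c)"
          using i(1) by blast
      qed
      moreover have "card ?I = (N + 1) ^ n" by (simp add: card_PiE)
      ultimately have "(N + 1) ^ n \<le> cover_num (weak_star_topology X) (join_cover (weak_star_topology X) (induced_maps X f) a U2 n)" by simp
      then have "real ((N + 1) ^ n) \<le> real (cover_num (weak_star_topology X) (join_cover (weak_star_topology X) (induced_maps X f) a U2 n))"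
        by (rule of_nat_mono)
      then show ?thesis by (simp add: add.commute)
    qed
    show ?thesis by (rule seq_entropy_ge[OF oc2 _ cn]) simp_all
  qed
  have weak_inf: "seq_entropy (weak_star_topology X) (induced_maps X f) a = \<infinity>"
    by (rule ereal_inf_from_ln[OF weakN])
  have s1: "seq_entropy (top_of_set X) f a \<le> sup_seq_entropy (top_of_set X) f"
    unfolding sup_seq_entropy_def by (rule SUP_upper[OF aS])
  have "seq_entropy (weak_star_topology X) (induced_maps X f) a \<le> sup_seq_entropy (weak_star_topology X) (induced_maps X f)"
    unfolding sup_seq_entropy_def by (rule SUP_upper[OF aS])
  then have s2: "sup_seq_entropy (weak_star_topology X) (induced_maps X f) = \<infinity>" using weak_inf by simp
  show ?thesis using aS s1 top_ent weak_inf s2 by blast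
qed

end
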